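(* If the moment matrix admits the Gauss–Borel factorization $g=S^{-1}\bar S$, then $S\Upsilon_1S^{-1}=\bar S\Upsilon_2^\top\bar S^{-1}$.
   Context: $g=(g_{i,j})_{i,j\ge0}$ with $g_{i,j}=\int x^{k_1(i)+k_2(j)}w_{1,a_1(i)}(x)w_{2,a_2(j)}(x)d\mu(x)$, where $\mu$ is a finite Borel measure on an interval, $w_{1,a}$ ($a\le p_1$), $w_{2,b}$ ($b\le p_2$) are weights with finite moments, and for compositions $\vec n_\ell\in\mathbb N^{p_\ell}$ each $i\in\mathbb Z_+$ is uniquely $i=q|\vec n_\ell|+n_{\ell,1}+\dots+n_{\ell,a-1}+r$, $0\le r<n_{\ell,a}$, $a_\ell(i)=a$, $k_\ell(i)=qn_{\ell,a}+r$. Gauss–Borel factorization: $S$ semi-infinite lower triangular with unit diagonal, $\bar S$ semi-infinite upper triangular with nonzero diagonal. $e_{\ell,a}(k)=e_i$ for the unique $i$ with $a_\ell(i)=a,k_\ell(i)=k$; $\Lambda_{\ell,a}=\sum_ke_{\ell,a}(k)e_{\ell,a}(k+1)^\top$; $\Upsilon_\ell=\sum_a\Lambda_{\ell,a}$. *)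

theory Defs
  imports "HOL-Analysis.Analysis"
begin

text \<open>Semi-infinite matrices are functions nat => nat => real (indices from 0).
  The product is the (unordered, infinite) sum over the middle index; in all
  products occurring below only finitely many terms are non-zero.\<close>

definition mmult :: "(nat \<Rightarrow> nat \<Rightarrow> real) \<Rightarrow> (nat \<Rightarrow> nat \<Rightarrow> real) \<Rightarrow> nat \<Rightarrow> nat \<Rightarrow> real" where
  "mmult A B i j = infsum (\<lambda>k. A i k * B k j) UNIV"

definition mtrans :: "(nat \<Rightarrow> nat \<Rightarrow> real) \<Rightarrow> nat \<Rightarrow> nat \<Rightarrow> real" where
  "mtrans A i j = A j i"

definition mid :: "nat \<Rightarrow> nat \<Rightarrow> real" where
  "mid i j = (if i = j then 1 else 0)"

definition lower_triangular :: "(nat \<Rightarrow> nat \<Rightarrow> real) \<Rightarrow> bool" where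
  "lower_triangular A \<longleftrightarrow> (\<forall>i j. i < j \<longrightarrow> A i j = 0)"

definition upper_triangular :: "(nat \<Rightarrow> nat \<Rightarrow> real) \<Rightarrow> bool" where
  "upper_triangular A \<longleftrightarrow> (\<forall>i j. j < i \<longrightarrow> A i j = 0)"

definition composition :: "nat list \<Rightarrow> bool" where
  "composition ns \<longleftrightarrow> ns \<noteq> [] \<and> (\<forall>x\<in>set ns. 0 < x)"

text \<open>For i, the unique (a,k) with i = q|n| + n_1 + ... + n_{a-1} + r, 0 <= r < n_a,
  k = q n_a + r (a is 0-based here).\<close>

definition ak_pair :: "nat list \<Rightarrow> nat \<Rightarrow> nat \<times> nat" where
  "ak_pair ns i = (THE (a, k). a < length ns \<and>
      (\<exists>q r. i = q * sum_list ns + sum_list (take a ns) + r \<and> r < ns ! a \<and> k = q * ns ! a + r))"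

definition aidx :: "nat list \<Rightarrow> nat \<Rightarrow> nat" where
  "aidx ns i = fst (ak_pair ns i)"

definition kidx :: "nat list \<Rightarrow> nat \<Rightarrow> nat" where
  "kidx ns i = snd (ak_pair ns i)"

text \<open>e_{a}(k) = e_i for the unique i with a(i) = a and k(i) = k; we record the index i.\<close>

definition eidx :: "nat list \<Rightarrow> nat \<Rightarrow> nat \<Rightarrow> nat" where
  "eidx ns a k = (THE i. aidx ns i = a \<and> kidx ns i = k)"

text \<open>Lambda_a = sum_k e_a(k) e_a(k+1)^T ; Upsilon = sum_a Lambda_a.\<close>

definition Lambda :: "nat list \<Rightarrow> nat \<Rightarrow> nat \<Rightarrow> nat \<Rightarrow> real" where
  "Lambda ns a i j = (if \<exists>k. i = eidx ns a k \<and> j = eidx ns a (Suc k) then 1 else 0)"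

definition Upsilon :: "nat list \<Rightarrow> nat \<Rightarrow> nat \<Rightarrow> real" where
  "Upsilon ns i j = (\<Sum>a<length ns. Lambda ns a i j)"

definition moment_matrix :: "real measure \<Rightarrow> (nat \<Rightarrow> real \<Rightarrow> real) \<Rightarrow> (nat \<Rightarrow> real \<Rightarrow> real)
    \<Rightarrow> nat list \<Rightarrow> nat list \<Rightarrow> nat \<Rightarrow> nat \<Rightarrow> real" where
  "moment_matrix \<mu> w1 w2 n1 n2 i j =
     (LINT x|\<mu>. x ^ (kidx n1 i + kidx n2 j) * w1 (aidx n1 i) x * w2 (aidx n2 j) x)"

end

theory Submission imports Defs begin
definition off :: "nat list \<Rightarrow> nat \<Rightarrow> nat" where "off ns a = sum_list (take a ns)"
definition phi :: "nat list \<Rightarrow> nat \<Rightarrow> nat \<Rightarrow> nat" where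
  "phi ns a k = (k div ns!a) * sum_list ns + off ns a + k mod ns!a"

lemma off_mono: "a \<le> b \<Longrightarrow> off ns a \<le> off ns b"
proof -
  assume "a \<le> b"
  then have "take b ns = take a ns @ take (b - a) (drop a ns)"
    by (metis le_add_diff_inverse take_add)
  then show ?thesis unfolding off_def by simp
qed

lemma off_Suc: "a < length ns \<Longrightarrow> off ns (Suc a) = off ns a + ns!a"
  unfolding off_def by (simp add: take_Suc_conv_app_nth)

lemma off_le: "off ns a \<le> sum_list ns"
  unfolding off_def by (metis append_take_drop_id le_add1 sum_list_append)

lemma interval_exists: "s < sum_list ns \<Longrightarrow> \<exists>a<length ns. off ns a \<le> s \<and> s < off ns a + ns!a"
proof (induction ns arbitrary: s)
  case Nil then show ?case by simp
next
  case (Cons x xs)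
  show ?case
  proof (cases "s < x")
    case True then show ?thesis by (rule_tac x=0 in exI) (simp add: off_def)
  next
    case False
    then have "s - x < sum_list xs" using Cons.prems by simp
    from Cons.IH[OF this] obtain a where "a < length xs" "off xs a \<le> s - x" "s - x < off xs a + xs!a" by blast
    then show ?thesis using False
      by (rule_tac x="Suc a" in exI) (auto simp: off_def)
  qed
qed

lemma uniq_core:
  assumes "a < length ns" "a' < length ns"
    "i = q * sum_list ns + off ns a + r" "r < ns!a"
    "i = q' * sum_list ns + off ns a' + r'" "r' < ns!a'"
  shows "a = a' \<and> q = q' \<and> r = r'"
proof -
  let ?N = "sum_list ns"
  have b1: "off ns a + r < ?N" using assms off_Suc[of a ns] off_le[of ns "Suc a"] by simp
  have b2: "off ns a' + r' < ?N" using assms off_Suc[of a' ns] off_le[of ns "Suc a'"] by simp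
  have i1: "i = (off ns a + r) + ?N * q" using assms(3) by simp
  have i2: "i = (off ns a' + r') + ?N * q'" using assms(5) by simp
  have N0: "?N > 0" using b1 by linarith
  have d1: "(off ns a + r) div ?N = 0" "(off ns a + r) mod ?N = off ns a + r" using b1 by simp_all
  have d2: "(off ns a' + r') div ?N = 0" "(off ns a' + r') mod ?N = off ns a' + r'" using b2 by simp_all
  have "i div ?N = q" "i mod ?N = off ns a + r" using d1 N0 unfolding i1
    by (simp_all only: div_mult_self2[of ?N] mod_mult_self2 neq0_conv)
  moreover have "i div ?N = q'" "i mod ?N = off ns a' + r'" using d2 N0 unfolding i2
    by (simp_all only: div_mult_self2[of ?N] mod_mult_self2 neq0_conv)
  ultimately have qq: "q = q'" and e: "off ns a + r = off ns a' + r'" by simp_all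
  have "a = a'"
  proof (rule ccontr)
    assume "a \<noteq> a'"
    then consider "a < a'" | "a' < a" by linarith
    then show False
    proof cases
      case 1
      then have "off ns (Suc a) \<le> off ns a'" by (intro off_mono) simp
      then show False using e assms off_Suc[of a ns] by simp
    next
      case 2
      then have "off ns (Suc a') \<le> off ns a" by (intro off_mono) simp
      then show False using e assms off_Suc[of a' ns] by simp
    qed
  qed
  then show ?thesis using qq e by simp
qed

definition P :: "nat list \<Rightarrow> nat \<Rightarrow> nat \<Rightarrow> nat \<Rightarrow> bool" where
  "P ns i a k \<longleftrightarrow> a < length ns \<and>
      (\<exists>q r. i = q * sum_list ns + sum_list (take a ns) + r \<and> r < ns ! a \<and> k = q * ns ! a + r)"

lemma P_phi: "composition ns \<Longrightarrow> a < length ns \<Longrightarrow> P ns (phi ns a k) a k"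
  unfolding P_def phi_def off_def composition_def
  by (rule conjI, simp, rule_tac x="k div ns!a" in exI, rule_tac x="k mod ns!a" in exI)
     (auto simp: nth_mem div_mult_mod_eq)

lemma P_uniq: "P ns i a k \<Longrightarrow> P ns i a' k' \<Longrightarrow> a = a' \<and> k = k'"
  unfolding P_def off_def[symmetric] using uniq_core by metis

lemma P_ex: assumes "composition ns" shows "\<exists>a k. P ns i a k"
proof -
  let ?N = "sum_list ns"
  have "?N > 0" using assms unfolding composition_def
    by (metis elem_le_sum_list gr_zeroI in_set_conv_nth le_zero_eq length_greater_0_conv)
  then have "i mod ?N < ?N" by simp
  from interval_exists[OF this] obtain a where a: "a < length ns" "off ns a \<le> i mod ?N" "i mod ?N < off ns a + ns!a" by blast
  let ?r = "i mod ?N - off ns a"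
  have "i = (i div ?N) * ?N + off ns a + ?r" using a by simp
  then have "P ns i a ((i div ?N) * ns!a + ?r)" unfolding P_def off_def[symmetric] using a
    by (intro conjI exI[where x="i div ?N"] exI[where x="?r"]) auto
  then show ?thesis by blast
qed

lemma ak_pair_P: assumes "composition ns" shows "P ns i (aidx ns i) (kidx ns i)"
proof -
  obtain a k where "P ns i a k" using P_ex[OF assms] by blast
  have "ak_pair ns i = (a, k)"
    unfolding ak_pair_def P_def[symmetric]
  proof (rule the_equality)
    show "case (a, k) of (a, k) \<Rightarrow> P ns i a k" using \<open>P ns i a k\<close> by simp
    fix x assume "case x of (a, k) \<Rightarrow> P ns i a k"
    then show "x = (a, k)" using \<open>P ns i a k\<close> P_uniq by (cases x) auto
  qed
  then show ?thesis using \<open>P ns i a k\<close> by (simp add: aidx_def kidx_def)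
qed

lemma P_is_phi: "P ns i a k \<Longrightarrow> i = phi ns a k"
  unfolding P_def phi_def off_def by auto

lemma aidx_lt: "composition ns \<Longrightarrow> aidx ns i < length ns"
  using ak_pair_P unfolding P_def by blast

lemma phi_aidx: "composition ns \<Longrightarrow> phi ns (aidx ns i) (kidx ns i) = i"
  using ak_pair_P P_is_phi by metis

lemma aidx_phi: "composition ns \<Longrightarrow> a < length ns \<Longrightarrow> aidx ns (phi ns a k) = a \<and> kidx ns (phi ns a k) = k"
  using ak_pair_P P_phi P_uniq by metis

lemma eidx_phi: "composition ns \<Longrightarrow> a < length ns \<Longrightarrow> eidx ns a k = phi ns a k"
  unfolding eidx_def
  by (rule the_equality) (auto simp: aidx_phi dest: sym intro: phi_aidx[symmetric])

definition succ :: "nat list \<Rightarrow> nat \<Rightarrow> nat" where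
  "succ ns i = phi ns (aidx ns i) (Suc (kidx ns i))"

lemma Lambda_eq: assumes "composition ns" "a < length ns"
  shows "Lambda ns a i j = (if a = aidx ns i \<and> j = succ ns i then 1 else 0)"
proof -
  have "(\<exists>k. i = eidx ns a k \<and> j = eidx ns a (Suc k)) \<longleftrightarrow> (a = aidx ns i \<and> j = succ ns i)"
    using assms by (auto simp: eidx_phi succ_def aidx_phi phi_aidx intro!: exI[where x="kidx ns i"])
  then show ?thesis unfolding Lambda_def by simp
qed

lemma Upsilon_eq: assumes "composition ns"
  shows "Upsilon ns i j = (if j = succ ns i then 1 else 0)"
proof -
  have "Upsilon ns i j = (\<Sum>a<length ns. if a = aidx ns i then (if j = succ ns i then 1 else 0) else 0)"
    unfolding Upsilon_def using assms by (intro sum.cong) (auto simp: Lambda_eq)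
  also have "\<dots> = (if j = succ ns i then 1 else 0)" using aidx_lt[OF assms] by simp
  finally show ?thesis .
qed

lemma succ_idx: "composition ns \<Longrightarrow> aidx ns (succ ns i) = aidx ns i \<and> kidx ns (succ ns i) = Suc (kidx ns i)"
  unfolding succ_def using aidx_phi aidx_lt by blast

lemma infsum_supp:
  fixes f :: "nat \<Rightarrow> real"
  assumes "finite F" "\<And>k. k \<notin> F \<Longrightarrow> f k = 0"
  shows "infsum f UNIV = sum f F"
proof -
  have "infsum f UNIV = infsum f F"
    by (rule infsum_cong_neutral) (use assms in auto)
  also have "\<dots> = sum f F" using assms(1) by simp
  finally show ?thesis .
qed

definition rowfin :: "(nat \<Rightarrow> nat \<Rightarrow> real) \<Rightarrow> bool" where
  "rowfin A \<longleftrightarrow> (\<forall>i. finite {j. A i j \<noteq> 0})"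
definition colfin :: "(nat \<Rightarrow> nat \<Rightarrow> real) \<Rightarrow> bool" where
  "colfin A \<longleftrightarrow> (\<forall>j. finite {i. A i j \<noteq> 0})"

lemma mmult_row: "rowfin A \<Longrightarrow> finite F \<Longrightarrow> {k. A i k \<noteq> 0} \<subseteq> F \<Longrightarrow>
   mmult A B i j = (\<Sum>k\<in>F. A i k * B k j)"
  unfolding mmult_def by (rule infsum_supp) auto

lemma mmult_col: "finite F \<Longrightarrow> {k. B k j \<noteq> 0} \<subseteq> F \<Longrightarrow>
   mmult A B i j = (\<Sum>k\<in>F. A i k * B k j)"
  unfolding mmult_def by (rule infsum_supp) auto

lemma lower_rowfin: "lower_triangular A \<Longrightarrow> rowfin A"
  unfolding rowfin_def lower_triangular_def
  by (metis (mono_tags, lifting) finite_atMost infinite_super mem_Collect_eq not_le subsetI atMost_iff)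

lemma upper_colfin: "upper_triangular A \<Longrightarrow> colfin A"
  unfolding colfin_def upper_triangular_def
  by (metis (mono_tags, lifting) finite_atMost infinite_super mem_Collect_eq not_le subsetI atMost_iff)

lemma rowfin_mmult: assumes "rowfin A" "rowfin B" shows "rowfin (mmult A B)"
  unfolding rowfin_def
proof
  fix i
  let ?F = "{k. A i k \<noteq> 0}"
  let ?G = "\<Union>k\<in>?F. {l. B k l \<noteq> 0}"
  have fG: "finite ?G" using assms unfolding rowfin_def by blast
  have "{j. mmult A B i j \<noteq> 0} \<subseteq> ?G"
  proof
    fix j assume j: "j \<in> {j. mmult A B i j \<noteq> 0}"
    have "mmult A B i j = (\<Sum>k\<in>?F. A i k * B k j)"
      using assms by (intro mmult_row) (auto simp: rowfin_def)
    then have "(\<Sum>k\<in>?F. A i k * B k j) \<noteq> 0" using j by simp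
    then obtain k where "k \<in> ?F" "A i k * B k j \<noteq> 0" by (meson sum.neutral)
    then show "j \<in> ?G" by auto
  qed
  then show "finite {j. mmult A B i j \<noteq> 0}" using fG finite_subset by blast
qed

lemma assoc_rr: assumes "rowfin A" "rowfin B"
  shows "mmult (mmult A B) C = mmult A (mmult B C)"
proof (intro ext)
  fix i j
  let ?F = "{k. A i k \<noteq> 0}"
  let ?G = "\<Union>k\<in>?F. {l. B k l \<noteq> 0}"
  have fF: "finite ?F" using assms unfolding rowfin_def by blast
  have fG: "finite ?G" using assms unfolding rowfin_def by blast
  have AB: "mmult A B i l = (\<Sum>k\<in>?F. A i k * B k l)" for l
    using assms fF by (intro mmult_row) auto
  have "{l. mmult A B i l \<noteq> 0} \<subseteq> ?G"
  proof
    fix l assume "l \<in> {l. mmult A B i l \<noteq> 0}"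
    then have "(\<Sum>k\<in>?F. A i k * B k l) \<noteq> 0" using AB by simp
    then obtain k where "k \<in> ?F" "A i k * B k l \<noteq> 0" by (meson sum.neutral)
    then show "l \<in> ?G" by auto
  qed
  then have "mmult (mmult A B) C i j = (\<Sum>l\<in>?G. mmult A B i l * C l j)"
    using fG by (intro mmult_row rowfin_mmult assms)
  also have "\<dots> = (\<Sum>l\<in>?G. \<Sum>k\<in>?F. A i k * B k l * C l j)"
    by (simp add: AB sum_distrib_right)
  also have "\<dots> = (\<Sum>k\<in>?F. \<Sum>l\<in>?G. A i k * B k l * C l j)"
    by (rule sum.swap)
  also have "\<dots> = (\<Sum>k\<in>?F. A i k * mmult B C k j)"
  proof (rule sum.cong[OF refl])
    fix k assume k: "k \<in> ?F"
    have "mmult B C k j = (\<Sum>l\<in>?G. B k l * C l j)"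
      using k fG assms(2) by (intro mmult_row) auto
    then show "(\<Sum>l\<in>?G. A i k * B k l * C l j) = A i k * mmult B C k j"
      by (simp add: sum_distrib_left mult.assoc)
  qed
  also have "\<dots> = mmult A (mmult B C) i j"
    using fF assms(1) by (intro mmult_row[symmetric]) auto
  finally show "mmult (mmult A B) C i j = mmult A (mmult B C) i j" .
qed

lemma assoc_rc: assumes "rowfin A" "colfin C"
  shows "mmult (mmult A B) C = mmult A (mmult B C)"
proof (intro ext)
  fix i j
  let ?F = "{k. A i k \<noteq> 0}"
  let ?H = "{l. C l j \<noteq> 0}"
  have fF: "finite ?F" using assms unfolding rowfin_def by blast
  have fH: "finite ?H" using assms unfolding colfin_def by blast
  have AB: "mmult A B i l = (\<Sum>k\<in>?F. A i k * B k l)" for l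
    using assms fF by (intro mmult_row) auto
  have "mmult (mmult A B) C i j = (\<Sum>l\<in>?H. mmult A B i l * C l j)"
    using fH by (intro mmult_col) auto
  also have "\<dots> = (\<Sum>l\<in>?H. \<Sum>k\<in>?F. A i k * B k l * C l j)"
    by (simp add: AB sum_distrib_right)
  also have "\<dots> = (\<Sum>k\<in>?F. \<Sum>l\<in>?H. A i k * B k l * C l j)"
    by (rule sum.swap)
  also have "\<dots> = (\<Sum>k\<in>?F. A i k * mmult B C k j)"
  proof (rule sum.cong[OF refl])
    fix k assume k: "k \<in> ?F"
    have "mmult B C k j = (\<Sum>l\<in>?H. B k l * C l j)"
      using fH by (intro mmult_col) auto
    then show "(\<Sum>l\<in>?H. A i k * B k l * C l j) = A i k * mmult B C k j"
      by (simp add: sum_distrib_left mult.assoc)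
  qed
  also have "\<dots> = mmult A (mmult B C) i j"
    using fF assms(1) by (intro mmult_row[symmetric]) auto
  finally show "mmult (mmult A B) C i j = mmult A (mmult B C) i j" .
qed

lemma mid_left: "mmult mid A = A"
proof (intro ext)
  fix i j show "mmult mid A i j = A i j"
    unfolding mmult_def by (subst infsum_supp[where F="{i}"]) (auto simp: mid_def)
qed

lemma mid_right: "mmult A mid = A"
proof (intro ext)
  fix i j show "mmult A mid i j = A i j"
    unfolding mmult_def by (subst infsum_supp[where F="{j}"]) (auto simp: mid_def)
qed

lemma Ups_rowfin: "composition ns \<Longrightarrow> rowfin (Upsilon ns)"
  unfolding rowfin_def by (simp add: Upsilon_eq)

lemma UpsT_colfin: "composition ns \<Longrightarrow> colfin (mtrans (Upsilon ns))"
  unfolding colfin_def mtrans_def by (simp add: Upsilon_eq)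

lemma Ups_left: "composition ns \<Longrightarrow> mmult (Upsilon ns) A i j = A (succ ns i) j"
  unfolding mmult_def by (subst infsum_supp[where F="{succ ns i}"]) (auto simp: Upsilon_eq)

lemma UpsT_right: "composition ns \<Longrightarrow> mmult A (mtrans (Upsilon ns)) i j = A i (succ ns j)"
  unfolding mmult_def mtrans_def by (subst infsum_supp[where F="{succ ns j}"]) (auto simp: Upsilon_eq)

lemma shift: assumes "composition n1" "composition n2"
  shows "mmult (Upsilon n1) (moment_matrix \<mu> w1 w2 n1 n2) =
         mmult (moment_matrix \<mu> w1 w2 n1 n2) (mtrans (Upsilon n2))"
  by (intro ext) (simp add: Ups_left UpsT_right assms moment_matrix_def succ_idx)

theorem proposition2p13:
  fixes \<mu> :: "real measure" and I :: "real set"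
    and w1 w2 :: "nat \<Rightarrow> real \<Rightarrow> real" and n1 n2 :: "nat list"
    and S Sinv Sb Sbinv :: "nat \<Rightarrow> nat \<Rightarrow> real"
  assumes "composition n1" and "composition n2"
    and "is_interval I"
    and "finite_measure \<mu>" and "sets \<mu> = sets (restrict_space borel I)"
    and "\<forall>a<length n1. w1 a \<in> borel_measurable \<mu>"
    and "\<forall>b<length n2. w2 b \<in> borel_measurable \<mu>"
    and "\<forall>a<length n1. \<forall>b<length n2. \<forall>m::nat.
           integrable \<mu> (\<lambda>x. x ^ m * w1 a x * w2 b x)"
    and "lower_triangular S" and "\<forall>i. S i i = 1"
    and "lower_triangular Sinv" and "mmult S Sinv = mid" and "mmult Sinv S = mid"
    and "upper_triangular Sb" and "\<forall>i. Sb i i \<noteq> 0"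
    and "upper_triangular Sbinv" and "mmult Sb Sbinv = mid" and "mmult Sbinv Sb = mid"
    and "moment_matrix \<mu> w1 w2 n1 n2 = mmult Sinv Sb"
  shows "mmult (mmult S (Upsilon n1)) Sinv = mmult (mmult Sb (mtrans (Upsilon n2))) Sbinv"
proof -
  let ?g = "moment_matrix \<mu> w1 w2 n1 n2"
  let ?U1 = "Upsilon n1" and ?U2T = "mtrans (Upsilon n2)"
  let ?U = "mmult (mmult S ?U1) Sinv"
  have rS: "rowfin S" and rSi: "rowfin Sinv" using assms lower_rowfin by blast+
  have cSbi: "colfin Sbinv" using assms upper_colfin by blast
  have rU1: "rowfin ?U1" using assms Ups_rowfin by blast
  have cU2: "colfin ?U2T" using assms UpsT_colfin by blast
  have rSU: "rowfin (mmult S ?U1)" using rS rU1 rowfin_mmult by blast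
  have rU: "rowfin ?U" using rSU rSi rowfin_mmult by blast
  have sh: "mmult ?U1 ?g = mmult ?g ?U2T" using shift assms(1,2) by blast
  have "mmult ?U Sb = mmult (mmult S ?U1) (mmult Sinv Sb)"
    using assoc_rr[OF rSU rSi] by simp
  also have "\<dots> = mmult (mmult S ?U1) ?g" using assms by simp
  also have "\<dots> = mmult S (mmult ?U1 ?g)" using assoc_rr[OF rS rU1] by simp
  also have "\<dots> = mmult S (mmult (mmult Sinv Sb) ?U2T)" using sh assms by simp
  also have "\<dots> = mmult S (mmult Sinv (mmult Sb ?U2T))" using assoc_rc[OF rSi cU2] by simp
  also have "\<dots> = mmult (mmult S Sinv) (mmult Sb ?U2T)" using assoc_rr[OF rS rSi] by simp
  also have "\<dots> = mmult Sb ?U2T" using assms mid_left by simp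
  finally have US: "mmult ?U Sb = mmult Sb ?U2T" .
  have "?U = mmult ?U (mmult Sb Sbinv)" using assms mid_right by simp
  also have "\<dots> = mmult (mmult ?U Sb) Sbinv" using assoc_rc[OF rU cSbi] by simp
  also have "\<dots> = mmult (mmult Sb ?U2T) Sbinv" using US by simp
  finally show ?thesis .
qed

end
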